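(* Let $C\subseteq\{0,1\}^n$ be a linear code with dual distance $\Gamma$ and $|C|\leq 2^{\frac{1}{64}n}$, let $\epsilon<1/8$, and let $C'\subseteq C$ be nonempty such that $C$ is $C'$-partially testable with $q$ (possibly adaptive) queries for proximity parameter $\epsilon$. If $X\sim U(C')$, then $H[X]\leq\log|C|-\left\lfloor\frac{1}{32}\Gamma/q\right\rfloor$.
   Context: A linear code is an $\mathbb{F}_2$-subspace of $\{0,1\}^n$; its dual distance is the minimum Hamming weight of a nonzero vector of its dual code $C^\perp$. Distance is normalized Hamming distance, $d(x,C)=\min_{c\in C}|\{i:x_i\neq c_i\}|/n$. $C$ is $C'$-partially testable with $q$ adaptive queries if there is a randomized algorithm that, given query access to $x\in\{0,1\}^n$, queries at most $q$ bits of $x$ (each query may depend on the answers to previous queries) and outputs accept/reject, such that every $x\in C'$ is accepted with probability at least $2/3$ and every $x$ with $d(x,C)>\epsilon$ is rejected with probability at least $2/3$. $U(C')$ is the uniform distribution on $C'$; $H$ is Shannon entropy with base-2 logarithms and $\log$ is base 2. *)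

theory Defs
  imports "HOL-Probability.Probability_Mass_Function"
begin

text \<open>Words of length n over F_2 are boolean lists of length n (True = 1).\<close>

definition words :: "nat \<Rightarrow> bool list set" where
  "words n = {x. length x = n}"

definition xor_word :: "bool list \<Rightarrow> bool list \<Rightarrow> bool list" where
  "xor_word x y = map2 (\<noteq>) x y"

text \<open>An F_2-linear code: a subspace of F_2^n (over F_2, a nonempty set closed
  under addition is a subspace).\<close>
definition linear_code :: "nat \<Rightarrow> bool list set \<Rightarrow> bool" where
  "linear_code n C \<longleftrightarrow> C \<subseteq> words n \<and> replicate n False \<in> C \<and>
     (\<forall>x\<in>C. \<forall>y\<in>C. xor_word x y \<in> C)"

definition hamming_weight :: "bool list \<Rightarrow> nat" where
  "hamming_weight x = card {i. i < length x \<and> x ! i}"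

definition hamming :: "bool list \<Rightarrow> bool list \<Rightarrow> nat" where
  "hamming x y = card {i. i < length x \<and> x ! i \<noteq> y ! i}"

definition dual_code :: "nat \<Rightarrow> bool list set \<Rightarrow> bool list set" where
  "dual_code n C = {y \<in> words n. \<forall>c\<in>C. even (card {i. i < n \<and> y ! i \<and> c ! i})}"

definition is_dual_distance :: "nat \<Rightarrow> bool list set \<Rightarrow> nat \<Rightarrow> bool" where
  "is_dual_distance n C \<Gamma> \<longleftrightarrow>
     (\<exists>y\<in>dual_code n C. y \<noteq> replicate n False \<and> hamming_weight y = \<Gamma>) \<and>
     (\<forall>y\<in>dual_code n C. y \<noteq> replicate n False \<longrightarrow> \<Gamma> \<le> hamming_weight y)"

definition rel_dist :: "nat \<Rightarrow> bool list \<Rightarrow> bool list set \<Rightarrow> real" where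
  "rel_dist n x C = real (Min ((\<lambda>c. hamming x c) ` C)) / real n"

text \<open>Deterministic adaptive query algorithms = decision trees: query position i,
  continue in the left subtree if x_i = 1, in the right one if x_i = 0.\<close>
datatype dtree = Leaf bool | Query nat dtree dtree

fun run :: "dtree \<Rightarrow> bool list \<Rightarrow> bool" where
  "run (Leaf b) x = b"
| "run (Query i t1 t0) x = (if x ! i then run t1 x else run t0 x)"

fun depth :: "dtree \<Rightarrow> nat" where
  "depth (Leaf b) = 0"
| "depth (Query i t1 t0) = Suc (max (depth t1) (depth t0))"

fun queries_in :: "nat \<Rightarrow> dtree \<Rightarrow> bool" where
  "queries_in n (Leaf b) = True"
| "queries_in n (Query i t1 t0) = (i < n \<and> queries_in n t1 \<and> queries_in n t0)"

text \<open>A randomized adaptive algorithm making at most q queries is a probability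
  distribution over decision trees of depth at most q (random coins fixed up front).\<close>
definition partially_testable ::
  "nat \<Rightarrow> bool list set \<Rightarrow> bool list set \<Rightarrow> nat \<Rightarrow> real \<Rightarrow> bool" where
  "partially_testable n C C' q \<epsilon> \<longleftrightarrow>
     (\<exists>T :: dtree pmf.
        (\<forall>t\<in>set_pmf T. depth t \<le> q \<and> queries_in n t) \<and>
        (\<forall>x\<in>C'. measure_pmf.prob T {t. run t x} \<ge> 2/3) \<and>
        (\<forall>x\<in>words n. rel_dist n x C > \<epsilon> \<longrightarrow>
            measure_pmf.prob T {t. \<not> run t x} \<ge> 2/3))"

definition shannon_entropy :: "'a pmf \<Rightarrow> real" where
  "shannon_entropy p = - (\<Sum>x\<in>set_pmf p. pmf p x * log 2 (pmf p x))"

end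

theory Submission
  imports Defs
begin

definition chi :: "nat set \<Rightarrow> bool list \<Rightarrow> real" where
  "chi S x = (\<Prod>i\<in>S. if x ! i then -1 else 1)"

lemma xor_nth: "length x = length y \<Longrightarrow> i < length x \<Longrightarrow> xor_word x y ! i = (x ! i \<noteq> y ! i)"
  by (simp add: xor_word_def)

lemma xor_len: "length (xor_word x y) = min (length x) (length y)"
  by (simp add: xor_word_def)

lemma xor_xor: "length x = length y \<Longrightarrow> xor_word (xor_word x y) y = x"
  by (rule nth_equalityI) (auto simp: xor_nth xor_len)

lemma chi_xor:
  assumes "length x = length y" "S \<subseteq> {..<length x}"
  shows "chi S (xor_word x y) = chi S x * chi S y"
  unfolding chi_def prod.distrib[symmetric]
  by (rule prod.cong) (use assms in \<open>auto simp: xor_nth\<close>)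

lemma chi_card:
  assumes "finite S"
  shows "chi S x = (-1) ^ card {i\<in>S. x ! i}"
proof -
  have "chi S x = (\<Prod>i\<in>S \<inter> {i. x!i}. -1) * (\<Prod>i\<in>S \<inter> - {i. x!i}. 1)"
    unfolding chi_def by (rule prod.If_cases[OF assms])
  also have "S \<inter> {i. x!i} = {i\<in>S. x ! i}" by auto
  finally show ?thesis by simp
qed

lemma sum_chi_zero:
  assumes "finite W" "\<And>c. c \<in> W \<Longrightarrow> xor_word c c0 \<in> W"
    "\<And>c. c \<in> W \<Longrightarrow> length c = length c0"
    "\<And>c. c \<in> W \<Longrightarrow> chi S (xor_word c c0) = - chi S c"
  shows "(\<Sum>c\<in>W. chi S c) = 0"
proof -
  have "(\<Sum>c\<in>W. chi S c) = (\<Sum>c\<in>W. chi S (xor_word c c0))"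
    by (rule sum.reindex_bij_witness[where i="\<lambda>c. xor_word c c0" and j="\<lambda>c. xor_word c c0"])
       (auto simp: assms xor_xor)
  also have "\<dots> = - (\<Sum>c\<in>W. chi S c)" by (simp add: assms sum_negf)
  finally show ?thesis by simp
qed

lemma fourier:
  assumes "finite D" "D \<subseteq> {..<n}" "length x = n" "length z = n"
  shows "(\<Sum>S\<in>Pow D. chi S x * chi S z) = (if (\<forall>i\<in>D. x!i = z!i) then 2 ^ card D else 0)"
proof -
  define s where "s i = (if x!i \<noteq> z!i then -1 else (1::real))" for i
  have "(\<Sum>S\<in>Pow D. chi S x * chi S z) = (\<Sum>S\<in>Pow D. (\<Prod>i\<in>S. s i) * (\<Prod>i\<in>D-S. 1))"
    unfolding chi_def prod.distrib[symmetric] s_def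
    by (rule sum.cong[OF refl], simp, rule prod.cong[OF refl]) auto
  also have "\<dots> = (\<Prod>i\<in>D. s i + 1)" by (rule prod_add[symmetric, OF assms(1)])
  also have "\<dots> = (if (\<forall>i\<in>D. x!i = z!i) then 2 ^ card D else 0)"
  proof (cases "\<forall>i\<in>D. x!i = z!i")
    case True then show ?thesis by (simp add: s_def)
  next
    case False
    then obtain i where "i \<in> D" "x!i \<noteq> z!i" by auto
    then show ?thesis using assms(1) by (auto simp: s_def intro!: prod_zero)
  qed
  finally show ?thesis .
qed

lemma words_finite: "finite (words n)"
proof -
  have "words n = {xs. set xs \<subseteq> (UNIV::bool set) \<and> length xs = n}" by (auto simp: words_def)
  moreover have "finite {xs. set xs \<subseteq> (UNIV::bool set) \<and> length xs = n}"
    by (rule finite_lists_length_eq) simp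
  ultimately show ?thesis by simp
qed

lemma words_card: "card (words n) = 2 ^ n"
proof -
  have "words n = {xs. set xs \<subseteq> (UNIV::bool set) \<and> length xs = n}" by (auto simp: words_def)
  moreover have "card {xs. set xs \<subseteq> (UNIV::bool set) \<and> length xs = n} = card (UNIV::bool set) ^ n"
    by (rule card_lists_length_eq) simp
  ultimately show ?thesis by (simp add: card_UNIV_bool)
qed

lemma card_filter_sum: "finite W \<Longrightarrow> real (card {c\<in>W. P c}) = (\<Sum>c\<in>W. if P c then 1 else 0)"
  by (simp add: sum.inter_filter[symmetric])

lemma count_agree:
  assumes W: "finite W" "W \<subseteq> words n"
    and zero: "\<And>S. S \<subseteq> D \<Longrightarrow> S \<noteq> {} \<Longrightarrow> (\<Sum>c\<in>W. chi S c) = 0"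
    and D: "finite D" "D \<subseteq> {..<n}" and z: "length z = n"
  shows "real (card {c\<in>W. \<forall>i\<in>D. c!i = z!i}) * 2 ^ card D = real (card W)"
proof -
  have "real (card {c\<in>W. \<forall>i\<in>D. c!i = z!i}) * 2 ^ card D
      = (\<Sum>c\<in>W. (if (\<forall>i\<in>D. c!i = z!i) then 1 else 0) * 2 ^ card D)"
    by (simp only: card_filter_sum[OF W(1)] sum_distrib_right)
  also have "\<dots> = (\<Sum>c\<in>W. \<Sum>S\<in>Pow D. chi S c * chi S z)"
  proof (rule sum.cong[OF refl])
    fix c assume "c \<in> W"
    then have "length c = n" using W(2) by (auto simp: words_def)
    then show "(if (\<forall>i\<in>D. c!i = z!i) then 1 else 0) * 2 ^ card D = (\<Sum>S\<in>Pow D. chi S c * chi S z)"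
      using fourier[OF D \<open>length c = n\<close> z] by simp
  qed
  also have "\<dots> = (\<Sum>S\<in>Pow D. \<Sum>c\<in>W. chi S c * chi S z)"
    by (rule sum.swap)
  also have "\<dots> = (\<Sum>S\<in>Pow D. chi S z * (\<Sum>c\<in>W. chi S c))"
    by (simp only: sum_distrib_left mult.commute)
  also have "\<dots> = (\<Sum>S\<in>Pow D. if S = {} then real (card W) else 0)"
  proof (rule sum.cong[OF refl])
    fix S assume "S \<in> Pow D"
    show "chi S z * (\<Sum>c\<in>W. chi S c) = (if S = {} then real (card W) else 0)"
    proof (cases "S = {}")
      case True then show ?thesis by (simp add: chi_def)
    next
      case False then show ?thesis using zero \<open>S \<in> Pow D\<close> by simp
    qed
  qed
  also have "\<dots> = real (card W)" using D(1) by (simp add: sum.delta)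
  finally show ?thesis .
qed

lemma sum_chi_C:
  assumes lin: "linear_code n C" and dd: "is_dual_distance n C \<Gamma>"
    and S: "S \<subseteq> {..<n}" "S \<noteq> {}" "card S < \<Gamma>"
  shows "(\<Sum>c\<in>C. chi S c) = 0"
proof -
  have Cw: "C \<subseteq> words n" using lin by (simp add: linear_code_def)
  have finS: "finite S" using S(1) finite_subset by blast
  define y where "y = map (\<lambda>i. i \<in> S) [0..<n]"
  have ylen: "length y = n" by (simp add: y_def)
  have ynth: "i < n \<Longrightarrow> y ! i = (i \<in> S)" for i by (simp add: y_def)
  have yw: "y \<in> words n" by (simp add: words_def ylen)
  obtain i0 where i0: "i0 \<in> S" using S(2) by auto
  have "y \<noteq> replicate n False"
  proof
    assume "y = replicate n False"
    then have "y ! i0 = False" using i0 S(1) by auto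
    then show False using ynth i0 S(1) by auto
  qed
  moreover have "hamming_weight y = card S"
  proof -
    have "{i. i < length y \<and> y ! i} = S" using S(1) ynth ylen by auto
    then show ?thesis by (simp add: hamming_weight_def)
  qed
  ultimately have "y \<notin> dual_code n C" using dd S(3) by (auto simp: is_dual_distance_def)
  then obtain c0 where c0: "c0 \<in> C" "odd (card {i. i < n \<and> y ! i \<and> c0 ! i})"
    using yw by (auto simp: dual_code_def)
  have "{i. i < n \<and> y ! i \<and> c0 ! i} = {i\<in>S. c0 ! i}" using S(1) ynth by auto
  with c0 have chi0: "chi S c0 = -1" by (simp add: chi_card[OF finS])
  have lenc: "c \<in> C \<Longrightarrow> length c = n" for c using Cw by (auto simp: words_def)
  show ?thesis
  proof (rule sum_chi_zero[of _ c0])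
    show "finite C" using Cw words_finite finite_subset by blast
    show "c \<in> C \<Longrightarrow> xor_word c c0 \<in> C" for c using lin c0 by (simp add: linear_code_def)
    show "c \<in> C \<Longrightarrow> length c = length c0" for c using lenc c0 by simp
    show "c \<in> C \<Longrightarrow> chi S (xor_word c c0) = - chi S c" for c
      using chi_xor[of c c0 S] lenc c0 S(1) chi0 by simp
  qed
qed

lemma sum_chi_words:
  assumes S: "S \<subseteq> {..<n}" "S \<noteq> {}"
  shows "(\<Sum>c\<in>words n. chi S c) = 0"
proof -
  have finS: "finite S" using S(1) finite_subset by blast
  obtain i0 where i0: "i0 \<in> S" using S(2) by auto
  define c0 where "c0 = map (\<lambda>i. i = i0) [0..<n]"
  have c0len: "length c0 = n" by (simp add: c0_def)
  have "{i\<in>S. c0 ! i} = {i0}" using S(1) i0 by (auto simp: c0_def)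
  then have chi0: "chi S c0 = -1" by (simp add: chi_card[OF finS])
  show ?thesis
  proof (rule sum_chi_zero[of _ c0])
    show "finite (words n)" by (rule words_finite)
    show "c \<in> words n \<Longrightarrow> xor_word c c0 \<in> words n" for c by (simp add: words_def xor_len c0len)
    show "c \<in> words n \<Longrightarrow> length c = length c0" for c by (simp add: words_def c0len)
    show "c \<in> words n \<Longrightarrow> chi S (xor_word c c0) = - chi S c" for c
      using chi_xor[of c c0 S] c0len S(1) chi0 by (simp add: words_def)
  qed
qed


definition agree :: "nat set \<Rightarrow> bool list \<Rightarrow> bool list \<Rightarrow> bool" where
  "agree D z c \<longleftrightarrow> (\<forall>i\<in>D. c!i = z!i)"

lemma agree_insert:
  assumes "i \<notin> D" "i < length z"
  shows "agree (insert i D) (z[i:=b]) c \<longleftrightarrow> c!i = b \<and> agree D z c"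
  using assms unfolding agree_def by (auto simp: nth_list_update)

lemma split_query:
  assumes "finite W" "i \<notin> D" "i < length z"
  shows "card {c\<in>W. agree D z c \<and> run (Query i t1 t0) c} =
    card {c\<in>W. agree (insert i D) (z[i:=True]) c \<and> run t1 c} +
    card {c\<in>W. agree (insert i D) (z[i:=False]) c \<and> run t0 c}"
proof -
  have "{c\<in>W. agree D z c \<and> run (Query i t1 t0) c} =
    {c\<in>W. agree (insert i D) (z[i:=True]) c \<and> run t1 c} \<union>
    {c\<in>W. agree (insert i D) (z[i:=False]) c \<and> run t0 c}"
    using agree_insert[OF assms(2,3)] by auto
  moreover have "{c\<in>W. agree (insert i D) (z[i:=True]) c \<and> run t1 c} \<inter>
    {c\<in>W. agree (insert i D) (z[i:=False]) c \<and> run t0 c} = {}"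
    using agree_insert[OF assms(2,3)] by auto
  ultimately show ?thesis using assms(1) by (simp add: card_Un_disjoint)
qed

lemma in_query:
  assumes "i \<in> D"
  shows "{c\<in>W. agree D z c \<and> run (Query i t1 t0) c} = {c\<in>W. agree D z c \<and> run (if z!i then t1 else t0) c}"
  using assms unfolding agree_def by auto

lemma tree_count:
  fixes C :: "bool list set"
  assumes finC: "finite C" and Cw: "C \<subseteq> words n"
    and base: "\<And>D z. finite D \<Longrightarrow> D \<subseteq> {..<n} \<Longrightarrow> card D < G \<Longrightarrow> length z = n \<Longrightarrow>
       real (card {c\<in>C. agree D z c}) * 2^n = real (card {x\<in>words n. agree D z x}) * real (card C)"
  shows "queries_in n s \<Longrightarrow> finite D \<Longrightarrow> D \<subseteq> {..<n} \<Longrightarrow> card D + depth s < G \<Longrightarrow> length z = n \<Longrightarrow>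
    real (card {c\<in>C. agree D z c \<and> run s c}) * 2^n = real (card {x\<in>words n. agree D z x \<and> run s x}) * real (card C)"
proof (induction s arbitrary: D z)
  case (Leaf b)
  then show ?case using base[of D z] by (cases b) auto
next
  case (Query i t1 t0)
  show ?case
  proof (cases "i \<in> D")
    case True
    have "real (card {c\<in>C. agree D z c \<and> run (if z!i then t1 else t0) c}) * 2^n =
       real (card {x\<in>words n. agree D z x \<and> run (if z!i then t1 else t0) x}) * real (card C)"
      using Query by (cases "z!i") auto
    then show ?thesis by (simp only: in_query[OF True])
  next
    case False
    have il: "i < length z" using Query.prems by simp
    have fD: "finite (insert i D)" "insert i D \<subseteq> {..<n}" "card (insert i D) = Suc (card D)"
      using Query.prems False by auto
    have e1: "real (card {c\<in>C. agree (insert i D) (z[i:=True]) c \<and> run t1 c}) * 2^n =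
       real (card {x\<in>words n. agree (insert i D) (z[i:=True]) x \<and> run t1 x}) * real (card C)"
      using Query.IH(1)[of "insert i D" "z[i:=True]"] Query.prems fD by auto
    have e0: "real (card {c\<in>C. agree (insert i D) (z[i:=False]) c \<and> run t0 c}) * 2^n =
       real (card {x\<in>words n. agree (insert i D) (z[i:=False]) x \<and> run t0 x}) * real (card C)"
      using Query.IH(2)[of "insert i D" "z[i:=False]"] Query.prems fD by auto
    show ?thesis
      unfolding split_query[OF finC False il] split_query[OF words_finite False il]
      using e1 e0 by (simp add: algebra_simps)
  qed
qed

fun and_tree :: "dtree \<Rightarrow> dtree \<Rightarrow> dtree" where
  "and_tree (Leaf b) s = (if b then s else Leaf False)"
| "and_tree (Query i a b) s = Query i (and_tree a s) (and_tree b s)"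

lemma run_and_tree: "run (and_tree t s) x = (run t x \<and> run s x)"
  by (induction t) auto

lemma depth_and_tree: "depth (and_tree t s) \<le> depth t + depth s"
  by (induction t) auto

lemma queries_and_tree: "queries_in n t \<Longrightarrow> queries_in n s \<Longrightarrow> queries_in n (and_tree t s)"
  by (induction t) auto

primrec Tr :: "dtree pmf \<Rightarrow> nat \<Rightarrow> dtree pmf" where
  "Tr T 0 = return_pmf (Leaf True)"
| "Tr T (Suc r) = bind_pmf T (\<lambda>t. map_pmf (and_tree t) (Tr T r))"

lemma Tr_support:
  assumes "\<forall>t\<in>set_pmf T. depth t \<le> q \<and> queries_in n t"
  shows "s \<in> set_pmf (Tr T r) \<Longrightarrow> depth s \<le> r * q \<and> queries_in n s"
proof (induction r arbitrary: s)
  case 0 then show ?case by simp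
next
  case (Suc r)
  then obtain t s' where ts: "t \<in> set_pmf T" "s' \<in> set_pmf (Tr T r)" "s = and_tree t s'" by auto
  have "depth s \<le> depth t + depth s'" using ts(3) depth_and_tree by simp
  also have "\<dots> \<le> q + r * q" using assms ts Suc.IH[OF ts(2)] by (intro add_mono) auto
  finally show ?case using queries_and_tree assms ts Suc.IH[OF ts(2)] by auto
qed

lemma Tr_prob: "measure_pmf.prob (Tr T r) {s. run s x} = (measure_pmf.prob T {t. run t x}) ^ r"
proof (induction r)
  case 0 then show ?case by simp
next
  case (Suc r)
  define p where "p = measure_pmf.prob T {t. run t x}"
  have "ennreal (measure_pmf.prob (Tr T (Suc r)) {s. run s x}) = emeasure (Tr T (Suc r)) {s. run s x}"
    by (simp add: measure_pmf.emeasure_eq_measure)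
  also have "\<dots> = (\<integral>\<^sup>+t. emeasure (Tr T r) (and_tree t -` {s. run s x}) \<partial>T)"
    by simp
  also have "\<dots> = (\<integral>\<^sup>+t. ennreal (p ^ r) * indicator {t. run t x} t \<partial>T)"
  proof (rule nn_integral_cong)
    fix t
    show "emeasure (Tr T r) (and_tree t -` {s. run s x}) = ennreal (p ^ r) * indicator {t. run t x} t"
    proof (cases "run t x")
      case True
      then have "and_tree t -` {s. run s x} = {s. run s x}" by (auto simp: run_and_tree)
      then show ?thesis using True Suc.IH by (simp add: measure_pmf.emeasure_eq_measure p_def)
    next
      case False
      then have "and_tree t -` {s. run s x} = {}" by (auto simp: run_and_tree)
      then show ?thesis using False by simp
    qed
  qed
  also have "\<dots> = ennreal (p ^ r) * emeasure T {t. run t x}"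
    by (simp add: nn_integral_cmult_indicator)
  also have "\<dots> = ennreal (p ^ Suc r)"
    by (simp add: measure_pmf.emeasure_eq_measure p_def ennreal_mult' mult.commute)
  finally show ?case unfolding p_def by (simp add: ennreal_inj)
qed

lemma swap_sum_prob:
  assumes "finite A"
  shows "(\<Sum>a\<in>A. measure_pmf.prob M {s. P s a}) = measure_pmf.expectation M (\<lambda>s. real (card {a\<in>A. P s a}))"
proof -
  have "measure_pmf.expectation M (\<lambda>s. real (card {a\<in>A. P s a})) =
        measure_pmf.expectation M (\<lambda>s. \<Sum>a\<in>A. indicator {s. P s a} s)"
  proof (intro Bochner_Integration.integral_cong refl)
    fix s show "real (card {a\<in>A. P s a}) = (\<Sum>a\<in>A. indicator {s. P s a} s)"
      by (subst card_filter_sum[OF assms]) (simp add: indicator_def of_bool_def)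
  qed
  also have "\<dots> = (\<Sum>a\<in>A. measure_pmf.expectation M (indicator {s. P s a}))"
    by (rule Bochner_Integration.integral_sum) (simp add: measure_pmf.emeasure_finite less_top[symmetric])
  also have "\<dots> = (\<Sum>a\<in>A. measure_pmf.prob M {s. P s a})" by simp
  finally show ?thesis by simp
qed

lemma key_identity:
  assumes finC: "finite C"
    and sup: "\<forall>s\<in>set_pmf M. real (card {c\<in>C. run s c}) * 2^n = real (card {x\<in>words n. run s x}) * real (card C)"
  shows "(\<Sum>c\<in>C. measure_pmf.prob M {s. run s c}) * 2^n =
         (\<Sum>x\<in>words n. measure_pmf.prob M {s. run s x}) * real (card C)"
proof -
  have "(\<Sum>c\<in>C. measure_pmf.prob M {s. run s c}) * 2^n =
      measure_pmf.expectation M (\<lambda>s. real (card {c\<in>C. run s c}) * 2^n)"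
    by (simp add: swap_sum_prob[OF finC])
  also have "\<dots> = measure_pmf.expectation M (\<lambda>s. real (card {x\<in>words n. run s x}) * real (card C))"
    by (rule integral_cong_AE) (auto intro!: AE_pmfI simp: sup)
  also have "\<dots> = (\<Sum>x\<in>words n. measure_pmf.prob M {s. run s x}) * real (card C)"
    by (simp add: swap_sum_prob[OF words_finite])
  finally show ?thesis .
qed

lemma hamming_sum: "hamming x c = (\<Sum>i<length x. if x!i \<noteq> c!i then 1 else 0)"
proof -
  have "{i. i < length x \<and> x ! i \<noteq> c ! i} = {i\<in>{..<length x}. x!i \<noteq> c!i}" by auto
  moreover have "(\<Sum>i<length x. if x!i \<noteq> c!i then 1 else 0) = card {i\<in>{..<length x}. x!i \<noteq> c!i}"
    by (simp add: sum.inter_filter[symmetric])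
  ultimately show ?thesis by (simp add: hamming_def)
qed

lemma hamming_Cons: "hamming (b # x) (d # c) = (if b \<noteq> d then 1 else 0) + hamming x c"
  unfolding hamming_sum by (simp only: length_Cons sum.lessThan_Suc_shift nth_Cons_0 nth_Cons_Suc)

lemma words_Suc: "words (Suc m) = (\<lambda>(b, x). b # x) ` (UNIV \<times> words m)"
proof
  show "words (Suc m) \<subseteq> (\<lambda>(b, x). b # x) ` (UNIV \<times> words m)"
  proof
    fix x assume "x \<in> words (Suc m)"
    then obtain b y where "x = b # y" "length y = m" by (cases x) (auto simp: words_def)
    then show "x \<in> (\<lambda>(b, x). b # x) ` (UNIV \<times> words m)"
      by (intro image_eqI[of _ _ "(b, y)"]) (auto simp: words_def)
  qed
qed (auto simp: words_def)

lemma gen_fun: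
  fixes y :: real
  shows "length c = n \<Longrightarrow> (\<Sum>x\<in>words n. y ^ hamming x c) = (1 + y) ^ n"
proof (induction c arbitrary: n)
  case Nil
  then have "words n = {[]}" by (auto simp: words_def)
  then show ?case using Nil by (simp add: hamming_def)
next
  case (Cons d c)
  then obtain m where m: "n = Suc m" "length c = m" by auto
  have inj: "inj_on (\<lambda>(b, x). b # x) (UNIV \<times> words m)" by (auto simp: inj_on_def)
  have "(\<Sum>x\<in>words n. y ^ hamming x (d # c)) = (\<Sum>(b,x)\<in>UNIV \<times> words m. y ^ hamming (b # x) (d # c))"
    unfolding m(1) words_Suc by (subst sum.reindex[OF inj]) (simp add: case_prod_unfold)
  also have "\<dots> = (\<Sum>b\<in>UNIV. \<Sum>x\<in>words m. y ^ hamming (b # x) (d # c))"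
    by (rule sum.cartesian_product[symmetric])
  also have "\<dots> = (\<Sum>b\<in>UNIV. y ^ (if b \<noteq> d then 1 else 0) * (\<Sum>x\<in>words m. y ^ hamming x c))"
    by (simp add: hamming_Cons power_add sum_distrib_left)
  also have "\<dots> = (\<Sum>b\<in>UNIV. y ^ (if b \<noteq> d then 1 else 0)) * (1 + y) ^ m"
    using Cons.IH[OF m(2)] by (simp add: sum_distrib_right)
  also have "(\<Sum>b\<in>UNIV. y ^ (if b \<noteq> d then 1 else 0)) = 1 + y"
    by (cases d) (simp_all add: UNIV_bool)
  finally show ?case using m by simp
qed

lemma ball_count:
  assumes "length c = n"
  shows "real (card {x\<in>words n. hamming x c \<le> M}) * 4 ^ n \<le> 5 ^ n * 4 ^ M"
proof -
  let ?B = "{x\<in>words n. hamming x c \<le> M}"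
  have fin: "finite ?B" using words_finite by simp
  have "real (card ?B) * (1/4) ^ M = (\<Sum>x\<in>?B. (1/4::real) ^ M)" by simp
  also have "\<dots> \<le> (\<Sum>x\<in>?B. (1/4::real) ^ hamming x c)"
    by (intro sum_mono power_decreasing) auto
  also have "\<dots> \<le> (\<Sum>x\<in>words n. (1/4::real) ^ hamming x c)"
    by (intro sum_mono2 words_finite) auto
  also have "\<dots> = (5/4) ^ n" using gen_fun[OF assms, of "1/4"] by simp
  finally have "real (card ?B) * (1/4) ^ M * (4 ^ M * 4 ^ n) \<le> (5/4) ^ n * (4 ^ M * 4 ^ n)"
    by (intro mult_right_mono) auto
  then show ?thesis by (simp add: power_divide field_simps)
qed

lemma numeric:
  fixes K :: real and t M n :: nat
  assumes K: "K ^ 64 \<le> 2 ^ n" "K \<ge> 0" and t: "32 * t \<le> n" and M: "8 * M \<le> n" and n: "n \<ge> 8"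
  shows "K * (5 ^ n * 4 ^ M * 3 ^ (t+1)) \<le> 8 ^ n"
proof -
  define Z :: nat where "Z = 5 ^ n * 4 ^ M * 3 ^ (t+1)"
  have "Z ^ 64 = 5 ^ (n * 64) * 4 ^ (M * 64) * 3 ^ (t * 64) * 3 ^ 64"
    unfolding Z_def power_mult_distrib power_mult power_add by simp
  also have "\<dots> \<le> 5 ^ (n * 64) * 4 ^ (n * 8) * 3 ^ (n * 2) * 3 ^ 64"
  proof -
    have a: "(4::nat) ^ (M * 64) \<le> 4 ^ (n * 8)" using M by (intro power_increasing) auto
    have b: "(3::nat) ^ (t * 64) \<le> 3 ^ (n * 2)" using t by (intro power_increasing) auto
    show ?thesis using a b by (intro mult_right_mono mult_mono) auto
  qed
  also have "\<dots> = (5 ^ 64 * 4 ^ 8 * 3 ^ 2) ^ n * 3 ^ 64"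
    by (simp only: power_mult_distrib power_mult mult.commute[of n])
  finally have Z1: "Z ^ 64 \<le> (5 ^ 64 * 4 ^ 8 * 3 ^ 2) ^ n * 3 ^ 64" .
  have "(3::nat) ^ 64 \<le> (2 ^ 16) ^ 8" by simp
  also have "\<dots> \<le> (2 ^ 16) ^ n" using n by (intro power_increasing) auto
  finally have t3: "(3::nat) ^ 64 \<le> (2 ^ 16) ^ n" .
  have "2 ^ n * Z ^ 64 \<le> 2 ^ n * ((5 ^ 64 * 4 ^ 8 * 3 ^ 2) ^ n * (2 ^ 16) ^ n)"
    using Z1 t3 by (intro mult_left_mono) (auto intro: order.trans mult_left_mono)
  also have "\<dots> = (2 * (5 ^ 64 * 4 ^ 8 * 3 ^ 2) * 2 ^ 16) ^ n"
    by (simp only: power_mult_distrib)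
  also have "\<dots> \<le> ((2::nat) ^ 192) ^ n"
  proof (rule power_mono)
    show "2 * (5 ^ 64 * 4 ^ 8 * 3 ^ 2) * 2 ^ 16 \<le> (2::nat) ^ 192" by simp
  qed simp
  also have "\<dots> = (8 ^ n) ^ 64"
  proof -
    have "(2::nat) ^ 192 = 8 ^ 64" by simp
    then show ?thesis by (simp only: power_mult[symmetric] mult.commute)
  qed
  finally have Zn: "2 ^ n * Z ^ 64 \<le> (8 ^ n) ^ 64" .
  have "(K * real Z) ^ 64 = K ^ 64 * real Z ^ 64" by (simp add: power_mult_distrib)
  also have "\<dots> \<le> 2 ^ n * real Z ^ 64" using K by (intro mult_right_mono) auto
  also have "\<dots> = real (2 ^ n * Z ^ 64)" by simp
  also have "\<dots> \<le> real ((8 ^ n) ^ 64)" using Zn by (simp only: of_nat_le_iff)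
  also have "\<dots> = (8 ^ n) ^ 64" by simp
  finally have "(K * real Z) ^ 64 \<le> (8 ^ n) ^ 64" .
  then have "K * real Z \<le> 8 ^ n"
    using power_le_imp_le_base[of "K * real Z" 63 "8 ^ n"] by simp
  then show ?thesis by (simp add: Z_def)
qed

lemma entropy_uniform:
  assumes "finite A" "A \<noteq> {}"
  shows "shannon_entropy (pmf_of_set A) = log 2 (real (card A))"
proof -
  have k: "real (card A) > 0" using assms by (simp add: card_gt_0_iff)
  have "shannon_entropy (pmf_of_set A) = - (\<Sum>x\<in>A. 1 / real (card A) * log 2 (1 / real (card A)))"
    unfolding shannon_entropy_def using assms by (simp add: set_pmf_of_set)
  also have "\<dots> = - log 2 (1 / real (card A))" using k by simp
  also have "\<dots> = log 2 (real (card A))" using k by (simp add: log_divide)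
  finally show ?thesis .
qed

lemma near_bound:
  assumes finC: "finite C" "C \<subseteq> words n" "C \<noteq> {}" and eps: "\<epsilon> < 1/8" and n: "n > 0"
  shows "real (card {x\<in>words n. \<not> \<epsilon> < rel_dist n x C}) * 4 ^ n \<le> real (card C) * (5 ^ n * 4 ^ (n div 8))"
proof -
  let ?N = "{x\<in>words n. \<not> \<epsilon> < rel_dist n x C}"
  let ?B = "\<lambda>c. {x\<in>words n. hamming x c \<le> n div 8}"
  have sub: "?N \<subseteq> (\<Union>c\<in>C. ?B c)"
  proof
    fix x assume x: "x \<in> ?N"
    have "Min (hamming x ` C) \<in> hamming x ` C" using finC by (intro Min_in) auto
    then obtain c where c: "c \<in> C" "hamming x c = Min (hamming x ` C)" by auto
    have "real (hamming x c) / real n \<le> \<epsilon>" using x c by (simp add: rel_dist_def)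
    then have "real (hamming x c) / real n < 1/8" using eps by linarith
    then have "real (hamming x c) * 8 < real n" using n by (simp add: field_simps)
    then have "hamming x c * 8 < n" by linarith
    then have "hamming x c \<le> n div 8" by presburger
    then have "x \<in> ?B c" using x by simp
    then show "x \<in> (\<Union>c\<in>C. ?B c)" using c(1) by blast
  qed
  have "card ?N \<le> card (\<Union>c\<in>C. ?B c)"
    by (rule card_mono[OF _ sub]) (use finC words_finite in auto)
  also have "\<dots> \<le> (\<Sum>c\<in>C. card (?B c))" by (rule card_UN_le[OF finC(1)])
  finally have "real (card ?N) \<le> real (\<Sum>c\<in>C. card (?B c))" by (simp only: of_nat_le_iff)
  then have "real (card ?N) * 4 ^ n \<le> real (\<Sum>c\<in>C. card (?B c)) * 4 ^ n"
    by (rule mult_right_mono) simp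
  also have "\<dots> = (\<Sum>c\<in>C. real (card (?B c)) * 4 ^ n)" by (simp add: sum_distrib_right)
  also have "\<dots> \<le> (\<Sum>c\<in>C. 5 ^ n * 4 ^ (n div 8))"
  proof (rule sum_mono)
    fix c assume "c \<in> C"
    then have "length c = n" using finC by (auto simp: words_def)
    then show "real (card (?B c)) * 4 ^ n \<le> 5 ^ n * 4 ^ (n div 8)" by (rule ball_count)
  qed
  also have "\<dots> = real (card C) * (5 ^ n * 4 ^ (n div 8))" by simp
  finally show ?thesis .
qed

theorem lemma15:
  fixes n q \<Gamma> :: nat and C C' :: "bool list set" and \<epsilon> :: real
  assumes "linear_code n C"
    and "is_dual_distance n C \<Gamma>"
    and "real (card C) \<le> 2 powr (real n / 64)"
    and "\<epsilon> < 1/8"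
    and "C' \<subseteq> C" and "C' \<noteq> {}"
    and "partially_testable n C C' q \<epsilon>"
  shows "shannon_entropy (pmf_of_set C') \<le>
           log 2 (real (card C)) - real_of_int \<lfloor>(real \<Gamma> / 32) / real q\<rfloor>"
proof -
  note lin = assms(1) and dd = assms(2) and cardC = assms(3) and eps = assms(4)
    and sub = assms(5) and ne = assms(6) and pt = assms(7)
  have Cw: "C \<subseteq> words n" using lin by (simp add: linear_code_def)
  have finC: "finite C" using Cw words_finite finite_subset by blast
  have Cne: "C \<noteq> {}" using lin by (auto simp: linear_code_def)
  have finC': "finite C'" using sub finC finite_subset by blast
  have cC'pos: "real (card C') > 0" using finC' ne by (simp add: card_gt_0_iff)
  define t where "t = nat \<lfloor>(real \<Gamma> / 32) / real q\<rfloor>"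
  have tfl: "real_of_int \<lfloor>(real \<Gamma> / 32) / real q\<rfloor> = real t" unfolding t_def by simp
  have main: "real (card C') * 2 ^ t \<le> real (card C)"
  proof (cases "t = 0")
    case True
    then show ?thesis using card_mono[OF finC sub] by simp
  next
    case False
    then have t1: "t \<ge> 1" by simp
    have q0: "q > 0"
    proof (rule ccontr)
      assume "\<not> q > 0" then have "q = 0" by simp
      then show False using False by (simp add: t_def)
    qed
    have "real t \<le> (real \<Gamma> / 32) / real q"
      unfolding t_def using of_int_floor_le[of "(real \<Gamma> / 32) / real q"] by simp
    then have "real t * real q * 32 \<le> real \<Gamma>" using q0 by (simp add: field_simps)
    then have tq: "t * q * 32 \<le> \<Gamma>" by (metis of_nat_le_iff of_nat_mult of_nat_numeral)
    obtain y0 where y0: "y0 \<in> dual_code n C" "hamming_weight y0 = \<Gamma>"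
      using dd by (auto simp: is_dual_distance_def)
    have "hamming_weight y0 \<le> length y0" unfolding hamming_weight_def
      by (rule order.trans[OF card_mono[of "{..<length y0}"]]) auto
    then have Gn: "\<Gamma> \<le> n" using y0 by (auto simp: dual_code_def words_def)
    have tqge: "t \<le> t * q" using q0 by simp
    have qle: "q \<le> t * q" using t1 by simp
    have t32: "32 * t \<le> n" using tq tqge Gn by linarith
    have n32: "n \<ge> 32" using t32 t1 by linarith
    have tq1: "t * q \<ge> 1" using t1 q0 by simp
    have "(t + 1) * q = t * q + q" by (simp add: algebra_simps)
    then have rq: "(t + 1) * q < \<Gamma>" using tq qle tq1 by linarith
    obtain T where Tsup: "\<forall>t\<in>set_pmf T. depth t \<le> q \<and> queries_in n t"
      and Tacc: "\<forall>x\<in>C'. measure_pmf.prob T {t. run t x} \<ge> 2/3"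
      and Trej: "\<forall>x\<in>words n. rel_dist n x C > \<epsilon> \<longrightarrow> measure_pmf.prob T {t. \<not> run t x} \<ge> 2/3"
      using pt unfolding partially_testable_def by blast
    define p where "p x = measure_pmf.prob T {t. run t x}" for x
    define r where "r = t + 1"
    define M where "M = Tr T r"
    have supM: "s \<in> set_pmf M \<Longrightarrow> depth s \<le> r * q \<and> queries_in n s" for s
      unfolding M_def by (rule Tr_support[OF Tsup])
    have base: "real (card {c\<in>C. agree D z c}) * 2^n = real (card {x\<in>words n. agree D z x}) * real (card C)"
      if D: "finite D" "D \<subseteq> {..<n}" "card D < \<Gamma>" and z: "length z = n" for D z
    proof -
      have a: "real (card {c\<in>C. \<forall>i\<in>D. c!i = z!i}) * 2 ^ card D = real (card C)"
      proof (rule count_agree[OF finC Cw _ D(1,2) z])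
        fix S assume "S \<subseteq> D" "S \<noteq> {}"
        moreover have "card S \<le> card D" using \<open>S \<subseteq> D\<close> D(1) by (rule card_mono[rotated])
        ultimately show "(\<Sum>c\<in>C. chi S c) = 0" using D by (intro sum_chi_C[OF lin dd]) auto
      qed
      have b: "real (card {c\<in>words n. \<forall>i\<in>D. c!i = z!i}) * 2 ^ card D = real (card (words n))"
      proof (rule count_agree[OF words_finite order.refl _ D(1,2) z])
        fix S assume "S \<subseteq> D" "S \<noteq> {}"
        then show "(\<Sum>c\<in>words n. chi S c) = 0" using D by (intro sum_chi_words) auto
      qed
      define A where "A = real (card {c\<in>C. agree D z c})"
      define B where "B = real (card {x\<in>words n. agree D z x})"
      have a': "A * 2 ^ card D = real (card C)" using a by (simp add: A_def agree_def)
      have b': "B * 2 ^ card D = 2 ^ n" using b by (simp add: B_def agree_def words_card)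
      have "A * 2 ^ n * 2 ^ card D = B * real (card C) * 2 ^ card D"
        using a' b' by (metis mult.assoc mult.commute)
      then have "A * 2 ^ n = B * real (card C)" by simp
      then show ?thesis by (simp add: A_def B_def)
    qed
    have tc: "\<forall>s\<in>set_pmf M. real (card {c\<in>C. run s c}) * 2^n = real (card {x\<in>words n. run s x}) * real (card C)"
    proof
      fix s assume "s \<in> set_pmf M"
      then have s: "depth s \<le> r * q" "queries_in n s" using supM by auto
      have "depth s < \<Gamma>" using le_less_trans[OF s(1) rq[folded r_def]] .
      then have dG: "card {} + depth s < \<Gamma>" by (simp only: card.empty add_0)
      have "real (card {c\<in>C. agree {} (replicate n False) c \<and> run s c}) * 2^n =
          real (card {x\<in>words n. agree {} (replicate n False) x \<and> run s x}) * real (card C)"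
        by (rule tree_count[OF finC Cw base s(2) _ _ dG]) simp_all
      then show "real (card {c\<in>C. run s c}) * 2^n = real (card {x\<in>words n. run s x}) * real (card C)"
        by (simp add: agree_def)
    qed
    have key: "(\<Sum>c\<in>C. p c ^ r) * 2^n = (\<Sum>x\<in>words n. p x ^ r) * real (card C)"
      using key_identity[OF finC tc] by (simp add: M_def Tr_prob p_def)
    have p01: "0 \<le> p x" "p x \<le> 1" for x by (simp_all add: p_def)
    have lower: "real (card C') * (2/3) ^ r \<le> (\<Sum>c\<in>C. p c ^ r)"
    proof -
      have "real (card C') * (2/3) ^ r = (\<Sum>c\<in>C'. (2/3) ^ r)" by simp
      also have "\<dots> \<le> (\<Sum>c\<in>C'. p c ^ r)"
        using Tacc by (intro sum_mono power_mono) (auto simp: p_def)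
      also have "\<dots> \<le> (\<Sum>c\<in>C. p c ^ r)"
        using p01 by (intro sum_mono2 finC sub) auto
      finally show ?thesis .
    qed
    define N where "N = {x\<in>words n. \<not> \<epsilon> < rel_dist n x C}"
    have upper: "(\<Sum>x\<in>words n. p x ^ r) \<le> 2 ^ n * (1/3) ^ r + real (card N)"
    proof -
      have "(\<Sum>x\<in>words n. p x ^ r) \<le> (\<Sum>x\<in>words n. (1/3) ^ r + (if x \<in> N then 1 else 0))"
      proof (rule sum_mono)
        fix x assume x: "x \<in> words n"
        show "p x ^ r \<le> (1/3) ^ r + (if x \<in> N then 1 else 0)"
        proof (cases "x \<in> N")
          case True
          have h1: "p x ^ r \<le> 1" using p01 by (simp add: power_le_one)
          have h2: "(0::real) \<le> (1/3) ^ r" by simp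
          have "p x ^ r \<le> (1/3) ^ r + 1" using h1 h2 by linarith
          then show ?thesis using True by simp
        next
          case False
          then have far: "\<epsilon> < rel_dist n x C" using x by (simp add: N_def)
          have "measure_pmf.prob T {t. \<not> run t x} = 1 - p x"
          proof -
            have "{t. \<not> run t x} = space (measure_pmf T) - {t. run t x}" by auto
            moreover have "measure_pmf.prob T (space (measure_pmf T) - {t. run t x}) = 1 - measure_pmf.prob T {t. run t x}"
              by (rule measure_pmf.prob_compl) simp
            ultimately show ?thesis by (simp only: p_def)
          qed
          then have "p x \<le> 1/3" using Trej x far by fastforce
          then have "p x ^ r \<le> (1/3) ^ r" using p01 by (intro power_mono) auto
          then show ?thesis using False by simp
        qed
      qed
      also have "\<dots> = 2 ^ n * (1/3) ^ r + real (card N)"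
      proof -
        have "(\<Sum>x\<in>words n. (if x \<in> N then 1 else 0::real)) = real (card {x\<in>words n. x \<in> N})"
          by (simp add: card_filter_sum[OF words_finite])
        moreover have "{x\<in>words n. x \<in> N} = N" by (auto simp: N_def)
        ultimately show ?thesis by (simp add: sum.distrib words_card)
      qed
      finally show ?thesis .
    qed
    have Nb: "real (card N) * 4 ^ n \<le> real (card C) * (5 ^ n * 4 ^ (n div 8))"
      unfolding N_def using near_bound[OF finC Cw Cne eps] n32 by simp
    have K64: "real (card C) ^ 64 \<le> 2 ^ n"
    proof -
      have "real (card C) ^ 64 \<le> (2 powr (real n / 64)) ^ 64"
        using cardC by (intro power_mono) auto
      also have "\<dots> = 2 powr (real n)" by (simp add: powr_power)
      also have "\<dots> = 2 ^ n" by (simp add: powr_realpow)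
      finally show ?thesis .
    qed
    have "real (card C) * (5 ^ n * 4 ^ (n div 8) * 3 ^ (t+1)) \<le> 8 ^ n"
      by (rule numeric[OF K64]) (use t32 n32 in auto)
    then have CZ: "real (card C) * (5 ^ n * 4 ^ (n div 8)) * 3 ^ r \<le> 8 ^ n" by (simp add: r_def mult.assoc)
    have "real (card N) * 4 ^ n * 3 ^ r \<le> real (card C) * (5 ^ n * 4 ^ (n div 8)) * 3 ^ r"
      using Nb by (rule mult_right_mono) simp
    also note CZ
    also have "(8::real) ^ n = 2 ^ n * 4 ^ n" by (subst power_mult_distrib[symmetric]) simp
    finally have "real (card N) * 3 ^ r * 4 ^ n \<le> 2 ^ n * 4 ^ n" by (simp only: mult_ac)
    then have N3: "real (card N) * 3 ^ r \<le> 2 ^ n" by simp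
    have "real (card C') * (2/3) ^ r * 2 ^ n \<le> (\<Sum>c\<in>C. p c ^ r) * 2 ^ n"
      using lower by (rule mult_right_mono) simp
    also have "\<dots> = (\<Sum>x\<in>words n. p x ^ r) * real (card C)" by (rule key)
    also have "\<dots> \<le> (2 ^ n * (1/3) ^ r + real (card N)) * real (card C)"
      using upper by (rule mult_right_mono) simp
    finally have "real (card C') * (2/3) ^ r * 2 ^ n * 3 ^ r \<le> (2 ^ n * (1/3) ^ r + real (card N)) * real (card C) * 3 ^ r"
      by (rule mult_right_mono) simp
    moreover have "real (card C') * (2/3) ^ r * 2 ^ n * 3 ^ r = real (card C') * 2 ^ r * 2 ^ n"
    proof -
      have h: "(2/3::real) ^ r * 3 ^ r = 2 ^ r" by (simp add: power_divide)
      have "real (card C') * (2/3) ^ r * 2 ^ n * 3 ^ r = real (card C') * 2 ^ n * ((2/3) ^ r * 3 ^ r)"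
        by (simp only: mult_ac)
      also have "\<dots> = real (card C') * 2 ^ n * 2 ^ r" by (simp only: h)
      finally show ?thesis by (simp only: mult_ac)
    qed
    moreover have "(2 ^ n * (1/3) ^ r + real (card N)) * real (card C) * 3 ^ r =
        (2 ^ n + real (card N) * 3 ^ r) * real (card C)"
    proof -
      have "(1/3::real) ^ r * 3 ^ r = 1" by (simp add: power_divide)
      then show ?thesis by (simp add: algebra_simps)
    qed
    ultimately have "real (card C') * 2 ^ r * 2 ^ n \<le> (2 ^ n + real (card N) * 3 ^ r) * real (card C)"
      by simp
    also have "\<dots> \<le> (2 ^ n + 2 ^ n) * real (card C)"
      using N3 by (intro mult_right_mono) auto
    finally have "real (card C') * 2 ^ r * 2 ^ n \<le> 2 * real (card C) * 2 ^ n" by simp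
    then have "real (card C') * 2 ^ r \<le> 2 * real (card C)" by simp
    then show ?thesis by (simp add: r_def)
  qed
  have "log 2 (real (card C')) + real t = log 2 (real (card C') * 2 ^ t)"
    using cC'pos by (simp add: log_mult log_nat_power)
  also have "\<dots> \<le> log 2 (real (card C))"
  proof -
    have "real (card C) > 0" using finC Cne by (simp add: card_gt_0_iff)
    then show ?thesis using main cC'pos by (subst log_le_cancel_iff) auto
  qed
  finally show ?thesis
    using entropy_uniform[OF finC' ne] tfl by simp
qed

end
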